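(* Let $Q^\dagger$ be any linear combination of products of the form $\prod_{j\in Y}s_j^\dagger$ (over arbitrary vertex subsets $Y$). For every $k$-local operator $O$, the $(2k+1)$-fold iterated commutator $[\cdots[[O,Q^\dagger],Q^\dagger],\dots,Q^\dagger]$ vanishes. Consequently, if $H$ is a $k$-local operator with $H(Q^\dagger)^q|\overline 0\rangle=0$ for all $q\in\{0,1,\dots,2k\}$, then $H(Q^\dagger)^p|\overline 0\rangle=0$ for all integers $p\ge0$.
   Context: System of $N$ qubits with local basis $|0\rangle,|1\rangle$; $s_i^\dagger$ acts on site $i$ as $s^\dagger|0\rangle=|1\rangle$, $s^\dagger|1\rangle=0$, $s_i=(s_i^\dagger)^\dagger$; $|\overline 0\rangle=|0\rangle^{\otimes N}$. Every operator has a unique expansion in normal-ordered strings $s^\dagger_{j_1}\cdots s^\dagger_{j_n}s_{k_1}\cdots s_{k_m}$ (the $j$'s pairwise distinct, the $k$'s pairwise distinct); an operator is $k$-local if every string with nonzero coefficient in its expansion involves at most $k$ distinct sites. *)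

theory Defs
  imports "HOL-Analysis.Analysis"
begin

text \<open>Sites are the elements of a finite type 'n (so N = CARD('n)).
  The computational basis state |S> is indexed by the set S of sites in state |1>.
  An operator A is a matrix with entries A $ T $ S = <T|A|S>.\<close>

type_synonym 'n qop = "complex ^ ('n set) ^ ('n set)"
type_synonym 'n qstate = "complex ^ ('n set)"

definition sdag :: "'n::finite \<Rightarrow> 'n qop" where
  "sdag i = (\<chi> T S. if i \<notin> S \<and> T = insert i S then 1 else 0)"

definition sann :: "'n::finite \<Rightarrow> 'n qop" where
  "sann i = (\<chi> T S. if i \<in> S \<and> T = S - {i} then 1 else 0)"

text \<open>Normal-ordered string  (prod_{j in J} s_j^dag)(prod_{k in K} s_k), written out
  as a matrix: it annihilates on K (needs K \<subseteq> S), then creates on J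
  (needs J disjoint from S - K).\<close>
definition str :: "'n::finite set \<Rightarrow> 'n set \<Rightarrow> 'n qop" where
  "str J K = (\<chi> T S. if K \<subseteq> S \<and> J \<inter> (S - K) = {} \<and> T = (S - K) \<union> J then 1 else 0)"

definition k_local :: "nat \<Rightarrow> 'n::finite qop \<Rightarrow> bool" where
  "k_local k A \<longleftrightarrow> (\<exists>c :: 'n set \<Rightarrow> 'n set \<Rightarrow> complex.
      A = (\<chi> T S. \<Sum>J\<in>UNIV. \<Sum>K\<in>UNIV. c J K * str J K $ T $ S) \<and>
      (\<forall>J K. c J K \<noteq> 0 \<longrightarrow> card (J \<union> K) \<le> k))"

definition Qdag :: "('n::finite set \<Rightarrow> complex) \<Rightarrow> 'n qop" where
  "Qdag a = (\<chi> T S. \<Sum>Y\<in>UNIV. a Y * str Y {} $ T $ S)"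

definition comm :: "'n::finite qop \<Rightarrow> 'n qop \<Rightarrow> 'n qop" where
  "comm A B = A ** B - B ** A"

definition mpow :: "'n::finite qop \<Rightarrow> nat \<Rightarrow> 'n qop" where
  "mpow A p = (((**) A) ^^ p) (mat 1)"

definition vac :: "'n::finite qstate" where
  "vac = axis {} 1"

end

theory Submission
  imports Defs
begin

definition smul :: "complex \<Rightarrow> 'n::finite qop \<Rightarrow> 'n qop" where
  "smul c M = (\<chi> T S. c * M $ T $ S)"

lemma mm_entry: "(A ** B) $ T $ S = (\<Sum>U\<in>UNIV. A $ T $ U * B $ U $ S)"
  by (simp add: matrix_matrix_mult_def)

lemma mm_sub_l: "(A::'n::finite qop) ** (B - C) = A ** B - A ** C"
  by (simp add: vec_eq_iff mm_entry sum_subtractf algebra_simps)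
lemma mm_sub_r: "((A::'n::finite qop) - B) ** C = A ** C - B ** C"
  by (simp add: vec_eq_iff mm_entry sum_subtractf algebra_simps)
lemma mm_add_r: "((A::'n::finite qop) + B) ** C = A ** C + B ** C"
  by (simp add: vec_eq_iff mm_entry sum.distrib algebra_simps)
lemma mm_zero_l[simp]: "(0::'n::finite qop) ** C = 0"
  by (simp add: vec_eq_iff mm_entry)
lemma mm_zero_r[simp]: "(C::'n::finite qop) ** 0 = 0"
  by (simp add: vec_eq_iff mm_entry)
lemma mm_smul_l: "smul c (A::'n::finite qop) ** B = smul c (A ** B)"
  by (simp add: vec_eq_iff mm_entry smul_def sum_distrib_left algebra_simps)
lemma mm_smul_r: "(A::'n::finite qop) ** smul c B = smul c (A ** B)"
  by (simp add: vec_eq_iff mm_entry smul_def sum_distrib_left algebra_simps)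
lemma smul_sub: "smul c ((A::'n::finite qop) - B) = smul c A - smul c B"
  by (simp add: vec_eq_iff smul_def algebra_simps)
lemma smul_add: "smul c ((A::'n::finite qop) + B) = smul c A + smul c B"
  by (simp add: vec_eq_iff smul_def algebra_simps)
lemma smul_zero[simp]: "smul c (0::'n::finite qop) = 0"
  by (simp add: vec_eq_iff smul_def)

lemma comm_add: "comm (X + Y) Q = comm X Q + comm Y Q"
  by (simp add: comm_def mm_add_r matrix_add_ldistrib)
lemma comm_zero[simp]: "comm 0 Q = 0"
  by (simp add: comm_def)
lemma comm_smul: "comm (smul c X) Q = smul c (comm X Q)"
  by (simp add: comm_def mm_smul_l mm_smul_r smul_sub)
lemma comm_mult: "comm (X ** Y) Q = X ** comm Y Q + comm X Q ** Y"
  by (simp add: comm_def mm_sub_l mm_sub_r matrix_mul_assoc)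

abbreviation D :: "'n::finite qop \<Rightarrow> nat \<Rightarrow> 'n qop \<Rightarrow> 'n qop" where
  "D Q m \<equiv> (\<lambda>X. comm X Q) ^^ m"

lemma D_add: "D Q m (X + Y) = D Q m X + D Q m Y"
  by (induction m) (auto simp: comm_add)
lemma D_zero[simp]: "D Q m 0 = 0"
  by (induction m) auto
lemma D_smul: "D Q m (smul c X) = smul c (D Q m X)"
  by (induction m) (auto simp: comm_smul)
lemma D_sum: "D Q m (sum f A) = (\<Sum>x\<in>A. D Q m (f x))"
  by (induction A rule: infinite_finite_induct) (auto simp: D_add)

lemma D_Suc: "D Q (Suc m) X = D Q m (comm X Q)"
  by (simp only: funpow_Suc_right comp_apply)

lemma D_mono: "D Q m X = 0 \<Longrightarrow> m \<le> m' \<Longrightarrow> D Q m' X = 0"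
proof -
  assume a: "D Q m X = 0" "m \<le> m'"
  then have "m' = (m' - m) + m" by simp
  then have "D Q m' X = D Q (m' - m) (D Q m X)"
    by (metis funpow_add o_apply)
  then show ?thesis using a by simp
qed

lemma D_prod: "D Q (Suc a) X = 0 \<Longrightarrow> D Q (Suc b) Y = 0 \<Longrightarrow> D Q (Suc (a + b)) (X ** Y) = 0"
proof (induction "a + b" arbitrary: a b X Y)
  case 0
  then show ?case by (simp add: comm_mult)
next
  case (Suc n)
  have t1: "D Q (a + b) (X ** comm Y Q) = 0"
  proof (cases b)
    case 0
    with Suc.prems show ?thesis by simp
  next
    case (Suc b')
    have y: "D Q (Suc b') (comm Y Q) = 0" using Suc.prems(2) Suc by (simp only: D_Suc)
    have "D Q (Suc (a + b')) (X ** comm Y Q) = 0"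
      using Suc.hyps(1)[of a b', OF _ Suc.prems(1) y] Suc.hyps(2) Suc by simp
    then show ?thesis using Suc by (simp only: add_Suc_right)
  qed
  have t2: "D Q (a + b) (comm X Q ** Y) = 0"
  proof (cases a)
    case 0
    with Suc.prems show ?thesis by simp
  next
    case (Suc a')
    have x: "D Q (Suc a') (comm X Q) = 0" using Suc.prems(1) Suc by (simp only: D_Suc)
    have "D Q (Suc (a' + b)) (comm X Q ** Y) = 0"
      using Suc.hyps(1)[of a' b, OF _ x Suc.prems(2)] Suc.hyps(2) Suc by simp
    then show ?thesis using Suc by (simp only: add_Suc)
  qed
  show ?case using t1 t2 by (simp only: D_Suc comm_mult D_add add_0_right)
qed


lemma m1: "x * (if c then 1 else 0) = (if c then x else (0::complex))" by simp
lemma m2: "(if c then 1 else 0) * x = (if c then x else (0::complex))" by simp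

lemma mm_right_fun:
  assumes "\<And>U. (B::'n::finite qop) $ U $ S = (if P \<and> U = g then 1 else 0)"
  shows "(A ** B) $ T $ S = (if P then A $ T $ g else 0)"
  by (cases P) (simp_all add: mm_entry assms m1 m2)

lemma mm_left_fun:
  assumes "\<And>U. (A::'n::finite qop) $ T $ U = (if P \<and> U = g then 1 else 0)"
  shows "(A ** B) $ T $ S = (if P then B $ g $ S else 0)"
  by (cases P) (simp_all add: mm_entry assms m1 m2)

lemma str0_entry: "str J {} $ U $ S = (if J \<inter> S = {} \<and> U = S \<union> J then 1 else 0)"
  by (simp add: str_def)
lemma str0_entry': "str J {} $ T $ U = (if J \<subseteq> T \<and> U = T - J then 1 else 0)"
  by (auto simp add: str_def)
lemma str0K_entry: "str {} K $ U $ S = (if K \<subseteq> S \<and> U = S - K then 1 else 0)"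
  by (simp add: str_def)
lemma sann_entry: "sann k $ U $ S = (if k \<in> S \<and> U = S - {k} then 1 else 0)"
  by (simp add: sann_def)
lemma sann_entry': "sann k $ T $ U = (if k \<notin> T \<and> U = insert k T then 1 else 0)"
  by (auto simp add: sann_def)

lemma Qdag_entry: "Qdag b $ T $ S = (if S \<subseteq> T then b (T - S) else 0)"
proof -
  have e: "\<And>Y. (Y \<inter> S = {} \<and> T = S \<union> Y) = (S \<subseteq> T \<and> Y = T - S)" by auto
  show ?thesis by (simp add: Qdag_def str_def e if_distrib cong: if_cong)
qed

lemma Qdag_comm: "Qdag b ** Qdag c = Qdag c ** Qdag b"
proof -
  have "(Qdag b ** Qdag c) $ T $ S = (Qdag c ** Qdag b) $ T $ S" for T S
  proof (cases "S \<subseteq> T")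
    case False
    have "(Qdag b ** Qdag c) $ T $ S = 0" "(Qdag c ** Qdag b) $ T $ S = 0"
      unfolding mm_entry Qdag_entry using False by (intro sum.neutral ballI; auto)+
    then show ?thesis by simp
  next
    case True
    let ?I = "{U. S \<subseteq> U \<and> U \<subseteq> T}"
    have gen: "(Qdag b' ** Qdag c') $ T $ S = (\<Sum>U\<in>?I. b' (T - U) * c' (U - S))" for b' c'
    proof -
      have "\<And>U. (if U \<subseteq> T then b' (T - U) else 0) * (if S \<subseteq> U then c' (U - S) else 0)
          = (if S \<subseteq> U \<and> U \<subseteq> T then b' (T - U) * c' (U - S) else 0)" by auto
      then show ?thesis
        by (simp add: mm_entry Qdag_entry sum.inter_filter[symmetric])
    qed
    note l = gen[of b c] and r = gen[of c b]
    have "(\<Sum>U\<in>?I. b (T - U) * c (U - S)) = (\<Sum>U\<in>?I. c (T - U) * b (U - S))"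
    proof (rule sum.reindex_bij_witness[where i="\<lambda>U. S \<union> (T - U)" and j="\<lambda>U. S \<union> (T - U)"])
      fix U assume "U \<in> ?I"
      then have e1: "T - (S \<union> (T - U)) = U - S" and e2: "S \<union> (T - U) - S = T - U" by auto
      from \<open>U \<in> ?I\<close> show "S \<union> (T - (S \<union> (T - U))) = U" "S \<union> (T - U) \<in> ?I"
        using True by auto
      show "c (T - (S \<union> (T - U))) * b (S \<union> (T - U) - S) = b (T - U) * c (U - S)"
        unfolding e1 e2 by simp
    qed (use True in auto)
    then show ?thesis using l r by simp
  qed
  then show ?thesis unfolding vec_eq_iff by blast
qed


lemma sdag_entry': "sdag k $ T $ U = (if k \<in> T \<and> U = T - {k} then 1 else 0)"
  by (auto simp: sdag_def)

lemma sdag_entry: "sdag k $ U $ S = (if k \<notin> S \<and> U = insert k S then 1 else 0)"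
  by (auto simp: sdag_def)

lemma sdag_Qdag: "sdag k = Qdag (\<lambda>Y. if Y = {k} then 1 else 0)"
  by (auto simp: vec_eq_iff sdag_def Qdag_entry)

lemma str0_Qdag: "str J {} = Qdag (\<lambda>Y. if Y = J then 1 else 0)"
  by (auto simp: vec_eq_iff str_def Qdag_entry)

lemma sann_Qdag_comm:
  assumes "\<And>Y. k \<in> Y \<Longrightarrow> b Y = 0"
  shows "sann k ** Qdag b = Qdag b ** sann k"
proof -
  have "(sann k ** Qdag b) $ T $ S = (Qdag b ** sann k) $ T $ S" for T S
  proof -
    have l: "(sann k ** Qdag b) $ T $ S = (if k \<notin> T then Qdag b $ insert k T $ S else 0)"
      by (rule mm_left_fun, rule sann_entry')
    have r: "(Qdag b ** sann k) $ T $ S = (if k \<in> S then Qdag b $ T $ (S - {k}) else 0)"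
      by (rule mm_right_fun, rule sann_entry)
    show ?thesis
    proof (cases "k \<in> T"; cases "k \<in> S")
      assume a: "k \<notin> T" "k \<in> S"
      then have "insert k T - S = T - (S - {k})" "(S \<subseteq> insert k T) = (S - {k} \<subseteq> T)" by auto
      then show ?thesis using a l r by (simp add: Qdag_entry)
    next
      assume a: "k \<in> T" "k \<in> S"
      then have "k \<in> T - (S - {k})" by blast
      then show ?thesis using a assms l r by (simp add: Qdag_entry)
    next
      assume a: "k \<notin> T" "k \<notin> S"
      then have "k \<in> insert k T - S" by blast
      then show ?thesis using a assms l r by (simp add: Qdag_entry)
    next
      assume a: "k \<in> T" "k \<notin> S"
      then show ?thesis using l r by (simp add: Qdag_entry)
    qed
  qed
  then show ?thesis unfolding vec_eq_iff by blast
qed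

lemma Q_decomp:
  "Qdag a = Qdag (\<lambda>Y. if k \<in> Y then 0 else a Y) + sdag k ** Qdag (\<lambda>Y. if k \<in> Y then 0 else a (insert k Y))"
proof -
  have "Qdag a $ T $ S = (Qdag (\<lambda>Y. if k \<in> Y then 0 else a Y) + sdag k ** Qdag (\<lambda>Y. if k \<in> Y then 0 else a (insert k Y))) $ T $ S" for T S
  proof -
    have l: "(sdag k ** Qdag (\<lambda>Y. if k \<in> Y then 0 else a (insert k Y))) $ T $ S
       = (if k \<in> T then Qdag (\<lambda>Y. if k \<in> Y then 0 else a (insert k Y)) $ (T - {k}) $ S else 0)"
      by (rule mm_left_fun, rule sdag_entry')
    show ?thesis
    proof (cases "k \<in> T"; cases "k \<in> S")
      assume a: "k \<in> T" "k \<notin> S"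
      then have "insert k (T - {k} - S) = T - S" "k \<in> T - S" "(S \<subseteq> T - {k}) = (S \<subseteq> T)" by auto
      then show ?thesis using a l by (simp add: Qdag_entry)
    next
      assume a: "k \<in> T" "k \<in> S"
      then have "k \<notin> T - S" "\<not> S \<subseteq> T - {k}" by auto
      then show ?thesis using a l by (simp add: Qdag_entry)
    next
      assume a: "k \<notin> T" "k \<in> S"
      then have "k \<notin> T - S" by auto
      then show ?thesis using a l by (simp add: Qdag_entry)
    next
      assume a: "k \<notin> T" "k \<notin> S"
      then have "k \<notin> T - S" by auto
      then show ?thesis using a l by (simp add: Qdag_entry)
    qed
  qed
  then show ?thesis unfolding vec_eq_iff by blast
qed

lemma NN: "sdag k ** sdag k = 0"
proof -
  have "(sdag k ** sdag k) $ T $ S = 0 $ T $ S" for T S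
    by (subst mm_left_fun, rule sdag_entry', auto simp: sdag_def)
  then show ?thesis unfolding vec_eq_iff by blast
qed

lemma NsN: "sdag k ** sann k ** sdag k = sdag k"
proof -
  have "(sdag k ** sann k ** sdag k) $ T $ S = sdag k $ T $ S" for T S
    apply (subst mm_right_fun, rule sdag_entry)
    apply (subst mm_right_fun, rule sann_entry)
    by (auto simp: sdag_def)
  then show ?thesis unfolding vec_eq_iff by blast
qed

lemma str_split: "str J K = str J {} ** str {} K"
proof -
  have "str J K $ T $ S = (str J {} ** str {} K) $ T $ S" for T S
    by (subst mm_right_fun, rule str0K_entry, auto simp: str_def)
  then show ?thesis unfolding vec_eq_iff by blast
qed

lemma str_insert: "k \<notin> K \<Longrightarrow> str {} (insert k K) = sann k ** str {} K"
proof -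
  assume k: "k \<notin> K"
  have "str {} (insert k K) $ T $ S = (sann k ** str {} K) $ T $ S" for T S
    by (subst mm_right_fun, rule str0K_entry, use k in \<open>auto simp: str_def sann_def\<close>)
  then show ?thesis unfolding vec_eq_iff by blast
qed

lemma str_empty: "str {} {} = mat 1"
proof -
  have "str {} {} $ T $ S = mat 1 $ T $ S" for T S :: "'n::finite set"
    by (simp add: str_def mat_def)
  then show ?thesis unfolding vec_eq_iff by blast
qed


lemma mm_neg_l: "(- (A::'n::finite qop)) ** B = - (A ** B)"
  by (simp add: vec_eq_iff mm_entry sum_negf)
lemma mm_neg_r: "(A::'n::finite qop) ** (- B) = - (A ** B)"
  by (simp add: vec_eq_iff mm_entry sum_negf)

lemma D1: "D Q (Suc 0) X = comm X Q" by simp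

definition cm :: "'n::finite qop \<Rightarrow> 'n qop \<Rightarrow> bool" where
  "cm X C \<longleftrightarrow> X ** C = C ** X"

lemma cm_mult: "cm X C \<Longrightarrow> cm Y C \<Longrightarrow> cm (X ** Y) C"
  unfolding cm_def by (metis matrix_mul_assoc)
lemma cm_sub: "cm X C \<Longrightarrow> cm Y C \<Longrightarrow> cm (X - Y) C"
  unfolding cm_def by (simp add: mm_sub_l mm_sub_r)

lemma comm_decomp:
  assumes "cm X Q0" "cm X Q1"
  shows "comm X (Q0 + N ** Q1) = comm X N ** Q1"
proof -
  have "comm X (Q0 + N ** Q1) = X ** Q0 + (X ** N) ** Q1 - (Q0 ** X + N ** (Q1 ** X))"
    by (simp add: comm_def matrix_add_ldistrib mm_add_r matrix_mul_assoc)
  also have "\<dots> = (X ** N) ** Q1 - (N ** X) ** Q1"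
  proof -
    have e: "N ** (Q1 ** X) = (N ** X) ** Q1"
      using assms(2) unfolding cm_def by (metis matrix_mul_assoc)
    show ?thesis using assms(1) unfolding e cm_def by simp
  qed
  also have "\<dots> = comm X N ** Q1"
    by (simp add: comm_def mm_sub_r)
  finally show ?thesis .
qed

lemma comm_Qdag: "comm (Qdag b) (Qdag a) = 0"
  by (simp add: comm_def Qdag_comm)

lemma sann_nil: "D (Qdag a) 3 (sann k) = 0"
proof -
  define Q0 where "Q0 = Qdag (\<lambda>Y. if k \<in> Y then 0 else a Y)"
  define Q1 where "Q1 = Qdag (\<lambda>Y. if k \<in> Y then 0 else a (insert k Y))"
  define N where "N = sdag k"
  define s where "s = sann k"
  have Q: "Qdag a = Q0 + N ** Q1" unfolding Q0_def Q1_def N_def by (rule Q_decomp)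
  have s0: "cm s Q0" unfolding cm_def s_def Q0_def by (rule sann_Qdag_comm) simp
  have s1: "cm s Q1" unfolding cm_def s_def Q1_def by (rule sann_Qdag_comm) simp
  have N0: "cm N Q0" unfolding cm_def N_def Q0_def sdag_Qdag by (rule Qdag_comm)
  have N1: "cm N Q1" unfolding cm_def N_def Q1_def sdag_Qdag by (rule Qdag_comm)
  define h where "h = comm s N"
  have h0: "cm h Q0" unfolding h_def comm_def using s0 N0 by (intro cm_sub cm_mult)
  have h1: "cm h Q1" unfolding h_def comm_def using s1 N1 by (intro cm_sub cm_mult)
  have cs: "comm s (Qdag a) = h ** Q1" unfolding Q h_def using s0 s1 by (rule comm_decomp)
  have ch: "comm h (Qdag a) = comm h N ** Q1" unfolding Q using h0 h1 by (rule comm_decomp)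
  have NN': "N ** N = 0" unfolding N_def by (rule NN)
  have NsN': "N ** s ** N = N" unfolding N_def s_def by (rule NsN)
  have hN: "comm h N = - N - N"
  proof -
    have "h ** N = s ** (N ** N) - N ** s ** N" unfolding h_def comm_def
      by (simp add: mm_sub_r matrix_mul_assoc)
    also have "\<dots> = - N" using NN' NsN' by simp
    finally have a1: "h ** N = - N" .
    have "N ** h = N ** s ** N - (N ** N) ** s" unfolding h_def comm_def
      by (simp add: mm_sub_l matrix_mul_assoc)
    also have "\<dots> = N" using NN' NsN' by simp
    finally have a2: "N ** h = N" .
    show ?thesis unfolding comm_def[of h N] a1 a2 by simp
  qed
  have cN: "comm N (Qdag a) = 0" unfolding N_def sdag_Qdag by (rule comm_Qdag)
  have cQ1: "comm Q1 (Qdag a) = 0" unfolding Q1_def by (rule comm_Qdag)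
  have c2: "comm (- N - N) (Qdag a) = 0"
  proof -
    have "N ** Qdag a = Qdag a ** N" using cN by (simp add: comm_def)
    then show ?thesis by (simp only: comm_def mm_sub_l mm_sub_r mm_neg_l mm_neg_r) simp
  qed
  have "D (Qdag a) (Suc (0 + 0)) (comm h N ** Q1) = 0"
    by (rule D_prod) (simp_all only: D1 hN c2 cQ1)
  then have "D (Qdag a) 1 (comm h (Qdag a)) = 0" using ch by simp
  then have dh: "D (Qdag a) (Suc 1) h = 0" by (simp only: D_Suc)
  have "D (Qdag a) (Suc (1 + 0)) (h ** Q1) = 0"
    by (rule D_prod) (use dh cQ1 in simp_all)
  then have "D (Qdag a) (Suc (1 + 0)) (comm s (Qdag a)) = 0" by (simp only: cs)
  then have "D (Qdag a) (Suc (Suc (1 + 0))) s = 0" by (simp only: D_Suc)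
  then show ?thesis unfolding s_def by (simp add: numeral_3_eq_3)
qed


lemma strK_nil: "D (Qdag a) (Suc (2 * card K)) (str {} K) = 0"
proof -
  have "finite K" by simp
  then show ?thesis
  proof (induction K rule: finite_induct)
    case empty
    have "comm (mat 1) (Qdag a) = 0" by (simp add: comm_def)
    then show ?case by (simp add: str_empty)
  next
    case (insert x F)
    have s3: "D (Qdag a) (Suc 2) (sann x) = 0" using sann_nil[of a x] by (simp add: numeral_3_eq_3)
    have "D (Qdag a) (Suc (2 + 2 * card F)) (sann x ** str {} F) = 0"
      by (rule D_prod[OF s3 insert.IH])
    moreover have "Suc (2 + 2 * card F) = Suc (2 * card (insert x F))" using insert by simp
    ultimately show ?case by (simp only: str_insert[OF insert(2)])
  qed
qed

lemma str_nil: "D (Qdag a) (Suc (2 * card K)) (str J K) = 0"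
proof -
  have j: "D (Qdag a) (Suc 0) (str J {}) = 0" unfolding str0_Qdag D1 by (rule comm_Qdag)
  have "D (Qdag a) (Suc (0 + 2 * card K)) (str J {} ** str {} K) = 0"
    by (rule D_prod[OF j strK_nil])
  then show ?thesis by (simp add: str_split[symmetric])
qed

lemma smul_0: "smul 0 X = 0"
  by (simp add: smul_def vec_eq_iff)

lemma part1:
  assumes "k_local k Op"
  shows "D (Qdag a) (2 * k + 1) Op = 0"
proof -
  obtain c where Op: "Op = (\<chi> T S. \<Sum>J\<in>UNIV. \<Sum>K\<in>UNIV. c J K * str J K $ T $ S)"
    and loc: "\<forall>J K. c J K \<noteq> 0 \<longrightarrow> card (J \<union> K) \<le> k"
    using assms unfolding k_local_def by blast
  have Op2: "Op = (\<Sum>J\<in>UNIV. \<Sum>K\<in>UNIV. smul (c J K) (str J K))"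
    unfolding Op vec_eq_iff by (simp add: smul_def)
  have t: "D (Qdag a) (2 * k + 1) (smul (c J K) (str J K)) = 0" for J K
  proof (cases "c J K = 0")
    case True
    then show ?thesis by (simp add: smul_0)
  next
    case False
    then have "card (J \<union> K) \<le> k" using loc by blast
    moreover have "card K \<le> card (J \<union> K)" by (rule card_mono) auto
    ultimately have "Suc (2 * card K) \<le> 2 * k + 1" by simp
    then have "D (Qdag a) (2 * k + 1) (str J K) = 0" by (rule D_mono[OF str_nil])
    then show ?thesis by (simp only: D_smul smul_zero)
  qed
  show ?thesis unfolding Op2 D_sum using t by simp
qed

lemma mpow_Suc: "mpow A (Suc p) = A ** mpow A p"
  by (simp add: mpow_def)

lemma part2:
  fixes Q :: "'n::finite qop" and v :: "'n qstate"
  shows "D Q m X = 0 \<Longrightarrow> (\<forall>q < m. X *v (mpow Q q *v v) = 0) \<Longrightarrow> X *v (mpow Q p *v v) = 0"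
proof (induction m arbitrary: X p)
  case 0
  then show ?case by simp
next
  case (Suc m)
  define Y where "Y = comm X Q"
  have dY: "D Q m Y = 0" using Suc.prems(1) unfolding Y_def by (simp only: D_Suc)
  have key: "X *v (mpow Q (Suc q) *v v) = Q *v (X *v (mpow Q q *v v)) + Y *v (mpow Q q *v v)" for q
  proof -
    have "X *v (mpow Q (Suc q) *v v) = (X ** Q) *v (mpow Q q *v v)"
      by (simp add: mpow_Suc matrix_vector_mul_assoc[symmetric])
    also have "X ** Q = Q ** X + Y" unfolding Y_def comm_def by simp
    finally show ?thesis
      by (simp add: matrix_vector_mult_add_rdistrib matrix_vector_mul_assoc[symmetric])
  qed
  have "\<forall>q < m. Y *v (mpow Q q *v v) = 0"
  proof (intro allI impI)
    fix q assume "q < m"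
    then have "X *v (mpow Q (Suc q) *v v) = 0" "X *v (mpow Q q *v v) = 0" using Suc.prems(2) by auto
    then show "Y *v (mpow Q q *v v) = 0" using key[of q] by simp
  qed
  then have Yall: "\<And>p. Y *v (mpow Q p *v v) = 0" using Suc.IH dY by blast
  show ?case
  proof (induction p)
    case 0
    then show ?case using Suc.prems(2) by simp
  next
    case (Suc p)
    then show ?case using key[of p] Yall[of p] by simp
  qed
qed

theorem proposition9:
  fixes a :: "'n::finite set \<Rightarrow> complex" and k :: nat
  shows "(\<forall>Op :: 'n qop. k_local k Op \<longrightarrow> ((\<lambda>X. comm X (Qdag a)) ^^ (2 * k + 1)) Op = 0)
       \<and> (\<forall>H :: 'n qop. k_local k H \<and> (\<forall>q \<le> 2 * k. H *v (mpow (Qdag a) q *v vac) = 0)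
            \<longrightarrow> (\<forall>p. H *v (mpow (Qdag a) p *v vac) = 0))"
proof (intro conjI allI impI)
  fix Op :: "'n qop" assume "k_local k Op"
  then show "((\<lambda>X. comm X (Qdag a)) ^^ (2 * k + 1)) Op = 0" by (rule part1)
next
  fix H :: "'n qop" and p
  assume h: "k_local k H \<and> (\<forall>q \<le> 2 * k. H *v (mpow (Qdag a) q *v vac) = 0)"
  then have "D (Qdag a) (2 * k + 1) H = 0" using part1 by blast
  moreover have "\<forall>q < 2 * k + 1. H *v (mpow (Qdag a) q *v vac) = 0" using h by auto
  ultimately show "H *v (mpow (Qdag a) p *v vac) = 0" by (rule part2)
qed

end
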